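(* Let $k$ be a positive integer such that $k+1$ is an odd prime. For every $\mathbf v\in N_k$ there exist $s,r\in\mathbb{Z}_{k+1}^\times$ such that every coordinate of $s\mathbf v+r(1,2,\ldots,k)\in\mathbb{Z}_{k+1}^k$ lies in $\{1,2,\ldots,k-1\}$ (as residues modulo $k+1$).
   Context: $\mathbb{Z}_{k+1}$ is the integers modulo $k+1$ and $\mathbb{Z}_{k+1}^\times$ its group of units. $N_k:=\{\mathbf v\in\mathbb{Z}_{k+1}^k:\ \mathbf v\neq\mathbf 0 \text{ and } \mathbf v \text{ has at least one zero coordinate}\}$. *)

theory Defs
  imports "HOL-Computational_Algebra.Primes"
begin

text \<open>Vectors in (Z_{k+1})^k are represented as functions v :: nat \<Rightarrow> int whose
  coordinates v 1, ..., v k are residues in {0..k} (values outside 1..k are irrelevant).\<close>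

definition vecs :: "nat \<Rightarrow> (nat \<Rightarrow> int) set" where
  "vecs k = {v. \<forall>i\<in>{1..k}. v i \<in> {0..int k}}"

definition N :: "nat \<Rightarrow> (nat \<Rightarrow> int) set" where
  "N k = {v \<in> vecs k. (\<exists>i\<in>{1..k}. v i \<noteq> 0) \<and> (\<exists>i\<in>{1..k}. v i = 0)}"

definition units_mod :: "nat \<Rightarrow> int set" where
  "units_mod k = {s \<in> {0..int k}. coprime s (int k + 1)}"

end

theory Submission
  imports Defs "HOL-Number_Theory.Number_Theory" "HOL-Computational_Algebra.Polynomial"
begin

lemma powsum_zero:
  fixes p j :: nat assumes p: "prime p" and j: "0 < j" "j < p - 1"
  shows "(\<Sum>c<p. c^j) mod p = 0"
proof -
  obtain g where g: "residue_primroot p g" using prime_primitive_root_exists[of p] p prime_gt_1_nat[of p] by blast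
  have cop: "coprime p g" and og: "ord p g = p - 1"
    using g p by (auto simp: residue_primroot_def totient_prime)
  have cop': "coprime g p" using cop by (simp add: coprime_commute)
  let ?f = "\<lambda>c. (g*c) mod p"
  have inj: "inj_on ?f {..<p}"
  proof (rule inj_onI)
    fix x y assume xy: "x \<in> {..<p}" "y \<in> {..<p}" "?f x = ?f y"
    then have "[g*x = g*y] (mod p)" by (simp add: cong_def)
    then have "[x = y] (mod p)" using cop' cong_mult_lcancel_nat by blast
    then show "x = y" using xy by (simp add: cong_def)
  qed
  have p0: "p > 0" using p prime_gt_0_nat by blast
  have img: "?f ` {..<p} = {..<p}"
    by (rule endo_inj_surj[OF finite_lessThan _ inj]) (use p0 in auto)
  have "(\<Sum>c<p. c^j) = (\<Sum>c\<in>?f ` {..<p}. c^j)" using img by simp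
  also have "\<dots> = (\<Sum>c<p. ((g*c) mod p)^j)" using sum.reindex[OF inj] by simp
  finally have "[(\<Sum>c<p. c^j) = (\<Sum>c<p. ((g*c) mod p)^j)] (mod p)" by simp
  moreover have "[(\<Sum>c<p. ((g*c) mod p)^j) = (\<Sum>c<p. (g*c)^j)] (mod p)"
    by (rule cong_sum, rule cong_pow) (simp add: cong_def)
  moreover have "(\<Sum>c<p. (g*c)^j) = g^j * (\<Sum>c<p. c^j)"
    by (simp add: power_mult_distrib sum_distrib_left)
  ultimately have S0: "[(\<Sum>c<p. c^j) = g^j * (\<Sum>c<p. c^j)] (mod p)"
    using cong_trans by metis
  then have S: "[1 * (\<Sum>c<p. c^j) = g^j * (\<Sum>c<p. c^j)] (mod p)" by simp
  show ?thesis
  proof (rule ccontr)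
    assume "(\<Sum>c<p. c^j) mod p \<noteq> 0"
    then have "\<not> p dvd (\<Sum>c<p. c^j)" by auto
    then have "coprime (\<Sum>c<p. c^j) p" using prime_imp_coprime[OF p] coprime_commute by blast
    then have "[1 = g^j] (mod p)" using S cong_mult_rcancel_nat by blast
    then have "[g^j = 1] (mod p)" by (simp add: cong_sym)
    moreover have "\<not> [g^j = 1] (mod p)" using ord_minimal[of j p g] j og by simp
    ultimately show False by blast
  qed
qed


lemma powsum_last:
  fixes p :: nat assumes p: "prime p"
  shows "[(\<Sum>c<p. c^(p-1)) = p - 1] (mod p)"
proof -
  have "[(\<Sum>c<p. c^(p-1)) = (\<Sum>c<p. if c = 0 then 0 else 1)] (mod p)"
  proof (rule cong_sum)
    fix c assume c: "c \<in> {..<p}"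
    show "[c^(p-1) = (if c = 0 then 0 else 1)] (mod p)"
    proof (cases "c = 0")
      case True
      have "p - 1 > 0" using prime_gt_1_nat[OF p] by simp
      then show ?thesis using True by (simp add: zero_power)
    next
      case False
      then have "\<not> p dvd c" using c by (auto dest: dvd_imp_le)
      then show ?thesis using fermat_theorem[OF p] False by simp
    qed
  qed
  moreover have "(\<Sum>c<p. if c = 0 then 0 else 1::nat) = p - 1"
  proof -
    obtain n where n: "p = Suc n" using prime_gt_0_nat[OF p] gr0_conv_Suc by blast
    show ?thesis unfolding n sum.lessThan_Suc_shift by simp
  qed
  ultimately show ?thesis by simp
qed

lemma poly_sum_mod:
  fixes Q :: "int poly" and p :: nat
  assumes p: "prime p" and dQ: "degree Q \<le> p - 1"
  shows "[(\<Sum>c<p. poly Q (int c)) = (int p - 1) * coeff Q (p-1)] (mod int p)"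
proof -
  have pe: "poly Q x = (\<Sum>i\<le>p-1. coeff Q i * x^i)" for x
  proof -
    have "(\<Sum>i\<le>p-1. coeff Q i * x^i) = (\<Sum>i\<le>degree Q. coeff Q i * x^i)"
      by (rule sum.mono_neutral_right) (use dQ in \<open>auto intro: le_degree\<close>)
    then show ?thesis by (simp add: poly_altdef)
  qed
  have "(\<Sum>c<p. poly Q (int c)) = (\<Sum>c<p. \<Sum>i\<le>p-1. coeff Q i * (int c)^i)"
    by (simp add: pe)
  also have "\<dots> = (\<Sum>i\<le>p-1. \<Sum>c<p. coeff Q i * (int c)^i)" by (rule sum.swap)
  also have "\<dots> = (\<Sum>i\<le>p-1. coeff Q i * int (\<Sum>c<p. c^i))"
    by (simp add: sum_distrib_left)
  finally have eq: "(\<Sum>c<p. poly Q (int c)) = (\<Sum>i\<le>p-1. coeff Q i * int (\<Sum>c<p. c^i))" .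
  have "[(\<Sum>i\<le>p-1. coeff Q i * int (\<Sum>c<p. c^i)) =
        (\<Sum>i\<le>p-1. if i = p - 1 then coeff Q i * (int p - 1) else 0)] (mod int p)"
  proof (rule cong_sum)
    fix i assume i: "i \<in> {..p-1}"
    show "[coeff Q i * int (\<Sum>c<p. c^i) = (if i = p - 1 then coeff Q i * (int p - 1) else 0)] (mod int p)"
    proof (cases "i = p - 1")
      case True
      have "[int (\<Sum>c<p. c^(p-1)) = int (p - 1)] (mod int p)"
        using powsum_last[OF p] cong_int_iff by blast
      moreover have "int (p - 1) = int p - 1" using prime_gt_0_nat[OF p] by simp
      ultimately show ?thesis using True by (simp add: cong_mult)
    next
      case False
      have "int p dvd int (\<Sum>c<p. c^i)"
      proof (cases "i = 0")
        case True then show ?thesis by simp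
      next
        case i0: False
        then have "(\<Sum>c<p. c^i) mod p = 0" using powsum_zero[OF p] False i by auto
        then have "p dvd (\<Sum>c<p. c^i)" by auto
        then show ?thesis using int_dvd_int_iff by blast
      qed
      then show ?thesis using False by (simp add: cong_def dvd_imp_mod_0)
    qed
  qed
  moreover have "(\<Sum>i\<le>p-1. if i = p - 1 then coeff Q i * (int p - 1) else 0) = (int p - 1) * coeff Q (p-1)"
    by simp
  ultimately show ?thesis using eq by (simp add: mult.commute)
qed


lemma inv_mod_ex:
  fixes P a :: int assumes "prime P" "\<not> P dvd a"
  shows "\<exists>t. [a * t = 1] (mod P)"
proof -
  have "coprime P a" using prime_imp_coprime[OF assms(1)] assms(2) by blast
  then have "coprime a P" by (simp add: coprime_commute)
  then show ?thesis using cong_solve_coprime_int by blast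
qed

lemma ndvd_small:
  fixes P x :: int assumes "0 < x" "x < P"
  shows "\<not> P dvd x"
  using assms zdvd_imp_le by fastforce

lemma mod_cong_eq: "[a = b] (mod (P::int)) \<Longrightarrow> a mod P = b mod P"
  by (simp add: cong_def)

theorem proposition4p1:
  fixes k :: nat and v :: "nat \<Rightarrow> int"
  assumes "k > 0" and "prime (k + 1)" and "odd (k + 1)"
    and "v \<in> N k"
  shows "\<exists>s\<in>units_mod k. \<exists>r\<in>units_mod k.
           \<forall>i\<in>{1..k}. (s * v i + r * int i) mod (int k + 1) \<in> {1..int k - 1}"
proof (rule ccontr)
  assume H: "\<not> ?thesis"
  define P where "P = int k + 1"
  define p where "p = k + 1"
  have pp: "prime p" using assms(2) p_def by simp
  have PP: "prime P" using pp unfolding P_def p_def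
    by (metis of_nat_Suc prime_nat_int_transfer Suc_eq_plus1 add.commute)
  have P1: "P > 1" using assms(1) P_def by simp
  have Pint: "P = int p" using P_def p_def by simp
  have vr: "\<And>i. i \<in> {1..k} \<Longrightarrow> 0 \<le> v i \<and> v i \<le> int k"
    using assms(4) by (auto simp: N_def vecs_def)
  obtain z where z: "z \<in> {1..k}" "v z = 0" using assms(4) by (auto simp: N_def)
  obtain i0 where i0: "i0 \<in> {1..k}" "v i0 \<noteq> 0" using assms(4) by (auto simp: N_def)
  define w where "w c i = (v i - int c * int i) mod P" for c i :: nat
  define good where "good c \<longleftrightarrow> (\<forall>i\<in>{1..k}. w c i \<noteq> 0)" for c
  have wr: "0 \<le> w c i \<and> w c i < P" for c i using P1 by (simp add: w_def)
  have good0: "c \<noteq> 0" if "good c" for c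
  proof
    assume c0: "c = 0"
    have "w c z \<noteq> 0" using z that good_def by blast
    moreover have "w c z = 0" using c0 z by (simp add: w_def)
    ultimately show False by simp
  qed
  have unitI: "x \<in> units_mod k" if "0 \<le> x" "x < P" "\<not> P dvd x" for x
  proof -
    have "coprime P x" using prime_imp_coprime[OF PP] that(3) by blast
    then show ?thesis using that by (auto simp: units_mod_def P_def coprime_commute)
  qed
  have injA: "inj_on (w c) {1..k}" if gc: "good c" and ck: "c \<in> {1..k}" for c
  proof (rule ccontr)
    assume ni: "\<not> inj_on (w c) {1..k}"
    define W where "W = w c ` {1..k}"
    have cW: "card W < k"
    proof -
      have "card W \<le> card {1..k}" unfolding W_def by (rule card_image_le) simp
      moreover have "card W \<noteq> card {1..k}" using ni inj_on_iff_eq_card[of "{1..k}" "w c"] W_def by simp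
      ultimately show ?thesis by simp
    qed
    have "\<not> {1..int k} \<subseteq> W"
    proof
      assume "{1..int k} \<subseteq> W"
      then have "card {1..int k} \<le> card W" unfolding W_def by (intro card_mono) auto
      then show False using cW by simp
    qed
    then obtain y where y: "y \<in> {1..int k}" "y \<notin> W" by blast
    have ny: "\<not> P dvd y" using y by (intro ndvd_small) (auto simp: P_def)
    obtain t where t: "[y * t = 1] (mod P)" using inv_mod_ex[OF PP ny] by blast
    define s where "s = (- t) mod P"
    define r where "r = (- int c * s) mod P"
    have sy: "[s * y = -1] (mod P)"
    proof -
      have "[s * y = (-t) * y] (mod P)" unfolding s_def by (intro cong_mult) (simp_all add: cong_def)
      moreover have "[(-t) * y = - (y * t)] (mod P)" by (simp add: mult.commute)
      moreover have "[- (y * t) = -1] (mod P)" using t by (simp add: cong_minus_minus_iff)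
      ultimately show ?thesis using cong_trans by blast
    qed
    have ns: "\<not> P dvd s"
    proof
      assume "P dvd s"
      then have "P dvd s * y" by simp
      then have "P dvd -1" using sy by (metis cong_dvd_iff)
      then show False using P1 by (simp add: zdvd_not_zless)
    qed
    have nc: "\<not> P dvd int c" using ck by (intro ndvd_small) (auto simp: P_def)
    have nr: "\<not> P dvd r"
    proof
      assume "P dvd r"
      then have "P dvd - int c * s" unfolding r_def by (simp add: dvd_mod_iff)
      then have "P dvd int c * s" by simp
      then show False using prime_dvd_mult_iff[OF PP] nc ns by blast
    qed
    have sU: "s \<in> units_mod k" using ns P1 by (intro unitI) (auto simp: s_def)
    have rU: "r \<in> units_mod k" using nr P1 by (intro unitI) (auto simp: r_def)
    have "\<forall>i\<in>{1..k}. (s * v i + r * int i) mod (int k + 1) \<in> {1..int k - 1}"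
    proof
      fix i assume i: "i \<in> {1..k}"
      define m where "m = (s * v i + r * int i) mod P"
      have m1: "[s * v i + r * int i = s * (v i - int c * int i)] (mod P)"
      proof -
        have "[s * v i + r * int i = s * v i + (- int c * s) * int i] (mod P)"
          unfolding r_def by (intro cong_add cong_mult) (simp_all add: cong_def)
        then show ?thesis by (simp add: algebra_simps)
      qed
      have m2: "[s * (v i - int c * int i) = s * w c i] (mod P)"
        unfolding w_def by (intro cong_mult) (simp_all add: cong_def)
      have mc: "[m = s * w c i] (mod P)" unfolding m_def using m1 m2 cong_trans
        by (metis cong_mod_left)
      have "w c i \<noteq> 0" using gc i good_def by blast
      then have wnz: "\<not> P dvd w c i"
        using wr[of c i] by (intro ndvd_small) auto
      have "m \<noteq> 0"
      proof
        assume "m = 0"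
        then have "P dvd s * w c i" using mc by (metis cong_dvd_iff dvd_0_right)
        then show False using prime_dvd_mult_iff[OF PP] ns wnz by blast
      qed
      moreover have "m \<noteq> int k"
      proof
        assume "m = int k"
        then have "[m = -1] (mod P)" by (simp add: cong_def P_def zmod_minus1)
        then have "[s * w c i = s * y] (mod P)" using mc sy by (meson cong_sym cong_trans)
        then have "P dvd s * (w c i - y)" by (simp add: cong_iff_dvd_diff right_diff_distrib)
        then have "P dvd (w c i - y)" using prime_dvd_mult_iff[OF PP] ns by blast
        then have "[w c i = y] (mod P)" by (simp add: cong_iff_dvd_diff)
        then have "w c i = y" using wr[of c i] y by (simp add: cong_def P_def)
        then have "y \<in> W" using i W_def by auto
        then show False using y by blast
      qed
      moreover have "0 \<le> m" "m < P" using P1 by (simp_all add: m_def)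
      ultimately have "m \<in> {1..int k - 1}" unfolding P_def by auto
      then show "(s * v i + r * int i) mod (int k + 1) \<in> {1..int k - 1}"
        using m_def P_def by simp
    qed
    then show False using H sU rU by blast
  qed
  define F where "F = (\<Prod>i\<in>{1..k}. int i)"
  define G where "G = {c\<in>{..<p}. good c}"
  have Gsub: "G \<subseteq> {1..k}"
  proof
    fix c assume "c \<in> G"
    then have gc: "good c" "c < p" by (auto simp: G_def)
    then have "c \<noteq> 0" using good0 by blast
    then show "c \<in> {1..k}" using gc p_def by auto
  qed
  have prodB: "(\<Prod>i\<in>{1..k}. w c i) = F" if gc: "good c" and ck: "c \<in> {1..k}" for c
  proof -
    have inj: "inj_on (w c) {1..k}" using injA gc ck by blast
    have sub: "w c ` {1..k} \<subseteq> int ` {1..k}"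
    proof
      fix x assume "x \<in> w c ` {1..k}"
      then obtain i where i: "i \<in> {1..k}" "x = w c i" by blast
      have "w c i \<noteq> 0" using gc i good_def by blast
      then have "1 \<le> x" "x \<le> int k" using wr[of c i] i P_def by auto
      then have "x = int (nat x)" "nat x \<in> {1..k}" by auto
      then show "x \<in> int ` {1..k}" by blast
    qed
    have "card (w c ` {1..k}) = card (int ` {1..k})"
      using card_image[OF inj] card_image[of int "{1..k}"] by simp
    then have eq: "w c ` {1..k} = int ` {1..k}"
      by (intro card_subset_eq sub) auto
    have "(\<Prod>i\<in>{1..k}. w c i) = (\<Prod>x\<in>w c ` {1..k}. x)"
      using prod.reindex[OF inj, of "\<lambda>x. x"] by simp
    also have "\<dots> = (\<Prod>x\<in>int ` {1..k}. x)" using eq by simp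
    also have "\<dots> = F" unfolding F_def using prod.reindex[of int "{1..k}" "\<lambda>x. x"] by simp
    finally show ?thesis .
  qed
  define Q where "Q = (\<Prod>i\<in>{1..k}. [:v i, - int i:])"
  have polyQ: "poly Q (int c) = (\<Prod>i\<in>{1..k}. v i - int c * int i)" for c
    unfolding Q_def poly_prod by (intro prod.cong) (simp_all add: algebra_simps)
  have Qc: "[poly Q (int c) = (if good c then F else 0)] (mod P)" if c: "c \<in> {..<p}" for c
  proof -
    have "[poly Q (int c) = (\<Prod>i\<in>{1..k}. w c i)] (mod P)"
      unfolding polyQ w_def by (intro cong_prod) (simp add: cong_def)
    moreover have "(\<Prod>i\<in>{1..k}. w c i) = (if good c then F else 0)"
    proof (cases "good c")
      case True
      then have "c \<noteq> 0" using good0 by blast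
      then have "c \<in> {1..k}" using c p_def by auto
      then show ?thesis using prodB True by simp
    next
      case False
      then obtain i where "i \<in> {1..k}" "w c i = 0" unfolding good_def by blast
      then have "(\<Prod>i\<in>{1..k}. w c i) = 0" by (intro prod_zero) auto
      then show ?thesis using False by simp
    qed
    ultimately show ?thesis by simp
  qed
  have sum1: "[(\<Sum>c<p. poly Q (int c)) = int (card G) * F] (mod P)"
  proof -
    have "[(\<Sum>c<p. poly Q (int c)) = (\<Sum>c<p. if good c then F else 0)] (mod P)"
      by (intro cong_sum Qc)
    moreover have "(\<Sum>c<p. if good c then F else 0) = int (card G) * F"
    proof -
      have "{..<p} \<inter> Collect good = G" by (auto simp: G_def)
      then show ?thesis by (simp add: sum.If_cases)
    qed
    ultimately show ?thesis by simp
  qed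
  have fnz: "\<forall>i\<in>{1..k}. [:v i, - int i:] \<noteq> 0" by auto
  have dQ: "degree Q = k"
  proof -
    have "degree Q = (\<Sum>i\<in>{1..k}. degree [:v i, - int i:])"
      unfolding Q_def by (rule degree_prod_eq_sum_degree[OF fnz])
    also have "\<dots> = (\<Sum>i\<in>{1..k}. 1)" by (intro sum.cong) auto
    finally show ?thesis by simp
  qed
  have ev: "even k" using assms(3) by simp
  have cQ: "coeff Q (p - 1) = F"
  proof -
    have "coeff Q (p - 1) = lead_coeff Q" using dQ p_def by simp
    also have "\<dots> = (\<Prod>i\<in>{1..k}. - int i)" unfolding Q_def lead_coeff_prod
      by (intro prod.cong) auto
    also have "\<dots> = (\<Prod>i\<in>{1..k}. (-1) * int i)" by simp
    also have "\<dots> = (-1) ^ k * F" unfolding F_def prod.distrib by simp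
    also have "\<dots> = F" using ev by simp
    finally show ?thesis .
  qed
  have sum2: "[(\<Sum>c<p. poly Q (int c)) = (P - 1) * F] (mod P)"
    using poly_sum_mod[OF pp, of Q] dQ cQ p_def Pint by simp
  have "[int (card G) * F = (P - 1) * F] (mod P)"
    using sum1 sum2 by (meson cong_sym cong_trans)
  then have "P dvd (int (card G) - (P - 1)) * F"
    by (simp add: cong_iff_dvd_diff left_diff_distrib)
  moreover have "\<not> P dvd F"
  proof
    assume "P dvd F"
    then obtain i where i: "i \<in> {1..k}" "P dvd int i"
      unfolding F_def using prime_dvd_prod_iff[OF _ PP] by blast
    have "\<not> P dvd int i" using i(1) by (intro ndvd_small) (auto simp: P_def)
    then show False using i by blast
  qed
  ultimately have "P dvd int (card G) - (P - 1)" using prime_dvd_mult_iff[OF PP] by blast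
  then have "P dvd int (card G) + 1"
    by (metis (no_types, lifting) diff_diff_eq2 dvd_diff dvd_refl add.commute diff_add_cancel)
  moreover have cG: "card G \<le> k" using card_mono[OF _ Gsub] by simp
  ultimately have "P \<le> int (card G) + 1" by (intro zdvd_imp_le) auto
  then have "card G = k" using cG P_def by simp
  then have Gall: "G = {1..k}" using Gsub by (intro card_subset_eq) auto
  have vi0: "0 < v i0" "v i0 < P" using vr[OF i0(1)] i0(2) P_def by auto
  have ni0: "\<not> P dvd int i0" using i0(1) by (intro ndvd_small) (auto simp: P_def)
  obtain t where t: "[int i0 * t = 1] (mod P)" using inv_mod_ex[OF PP ni0] by blast
  define c0 where "c0 = nat ((v i0 * t) mod P)"
  have c0i: "int c0 = (v i0 * t) mod P" unfolding c0_def using P1 by simp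
  have "c0 \<noteq> 0"
  proof
    assume "c0 = 0"
    then have "P dvd v i0 * t" using c0i by (simp add: dvd_eq_mod_eq_0)
    moreover have "\<not> P dvd t"
    proof
      assume "P dvd t"
      then have "P dvd int i0 * t" by simp
      then have "P dvd 1" using t by (metis cong_dvd_iff)
      then show False using P1 by (simp add: zdvd_not_zless)
    qed
    moreover have "\<not> P dvd v i0" using vi0 by (intro ndvd_small) auto
    ultimately show False using prime_dvd_mult_iff[OF PP] by blast
  qed
  moreover have "c0 < p" using c0i P1 Pint by (simp add: c0_def nat_less_iff)
  ultimately have "c0 \<in> G" using Gall p_def by auto
  then have "good c0" by (simp add: G_def)
  then have "w c0 i0 \<noteq> 0" using i0(1) good_def by blast
  moreover have "w c0 i0 = 0"
  proof -
    have "[v i0 - int c0 * int i0 = v i0 - (v i0 * t) * int i0] (mod P)"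
      by (intro cong_diff cong_mult) (simp_all add: c0i cong_def)
    moreover have "[v i0 - (v i0 * t) * int i0 = v i0 - v i0 * 1] (mod P)"
    proof -
      have "[v i0 * (int i0 * t) = v i0 * 1] (mod P)" using t by (intro cong_mult) simp_all
      then show ?thesis by (intro cong_diff) (simp_all add: algebra_simps)
    qed
    ultimately have "[v i0 - int c0 * int i0 = 0] (mod P)" using cong_trans by fastforce
    then show ?thesis by (simp add: w_def cong_def)
  qed
  ultimately show False by simp
qed

end
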